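(* Let $D$ be a discrete space, $M$ a Hausdorff space, $\pi:D\to M$ any map, and $\kappa$ a cardinal. If the power $M^\kappa$ is countably compact, then the power $(D\cup_\pi M)^\kappa$ is countably compact.
   Context: For a discrete space $D$: if $D$ is infinite, $\alpha D=D\cup\{\infty\}$ denotes its one-point (Aleksandrov) compactification; if $D$ is finite, $\alpha D=D\cup\{\infty\}$ is the topological sum of $D$ and a singleton $\{\infty\}$ with $\infty\notin D$. For a map $\pi:D\to M$ into a $T_1$ space $M$, $D\cup_\pi M$ is the subspace $\{(x,\pi(x)):x\in D\}\cup(\{\infty\}\times M)$ of $\alpha D\times M$. A space is countably compact if every countable open cover has a finite subcover. *)

theory Defs
  imports "HOL-Analysis.Analysis"
begin

definition countably_compact_space :: "'a topology \<Rightarrow> bool" where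
  "countably_compact_space X \<longleftrightarrow>
     (\<forall>\<U>. countable \<U> \<and> (\<forall>U\<in>\<U>. openin X U) \<and> topspace X \<subseteq> \<Union>\<U> \<longrightarrow>
        (\<exists>\<F>. finite \<F> \<and> \<F> \<subseteq> \<U> \<and> topspace X \<subseteq> \<Union>\<F>))"

text \<open>The space alpha D for a discrete space D (carrier the set D), realised on
  the type 'd option: Some x stands for x in D, and None is the extra point infinity.
  For infinite D it is the one-point (Aleksandrov) compactification of the discrete
  space D; for finite D it is the topological sum of D and the singleton {infinity},
  i.e. a finite discrete space.\<close>
definition alpha_space :: "'d set \<Rightarrow> 'd option topology" where
  "alpha_space D =
     (if finite D then discrete_topology (insert None (Some ` D))
      else topology (\<lambda>U. U \<subseteq> insert None (Some ` D) \<and>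
                         (None \<in> U \<longrightarrow> finite (D - Some -` U))))"

definition glued_space :: "'d set \<Rightarrow> ('d \<Rightarrow> 'm) \<Rightarrow> 'm topology \<Rightarrow> ('d option \<times> 'm) topology" where
  "glued_space D \<pi> M =
     subtopology (prod_topology (alpha_space D) M)
       ((\<lambda>x. (Some x, \<pi> x)) ` D \<union> ({None} \<times> topspace M))"

end

theory Submission
  imports Defs
begin

lemma my_max_ultrafilter:
  fixes F :: "'a filter"
  assumes F: "F \<noteq> bot"
  shows "\<exists>U\<le>F. U \<noteq> bot \<and> (\<forall>P. eventually P U \<or> eventually (\<lambda>x. \<not> P x) U)"
proof -
  let ?X = "{G. G \<noteq> bot \<and> G \<le> F}"
  let ?R = "{(b, a). a \<noteq> bot \<and> a \<le> b \<and> b \<le> F}"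
  have bot_notin_R: "c \<in> Chains ?R \<Longrightarrow> bot \<notin> c" for c
    by (auto simp: Chains_def)
  have [simp]: "Field ?R = ?X"
    by (auto simp: Field_def bot_unique)
  have "\<exists>m\<in>Field ?R. \<forall>a\<in>Field ?R. (m, a) \<in> ?R \<longrightarrow> a = m" (is "\<exists>m\<in>?A. ?B m")
  proof (rule Zorns_po_lemma)
    show "Partial_order ?R"
      by (auto simp: partial_order_on_def preorder_on_def
          antisym_def refl_on_def trans_def Field_def bot_unique)
    show "\<exists>u\<in>Field ?R. \<forall>a\<in>C. (a, u) \<in> ?R" if C: "C \<in> Chains ?R" for C
    proof (simp, intro exI conjI ballI)
      have Inf_C: "Inf C \<noteq> bot" "Inf C \<le> F" if "C \<noteq> {}"
      proof -
        from C that have "Inf C = bot \<longleftrightarrow> (\<exists>x\<in>C. x = bot)"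
          unfolding trivial_limit_def by (intro eventually_Inf_base) (auto simp: Chains_def)
        with C show "Inf C \<noteq> bot"
          by (simp add: bot_notin_R)
        from that obtain x where "x \<in> C" by auto
        with C show "Inf C \<le> F"
          by (auto intro!: Inf_lower2[of x] simp: Chains_def)
      qed
      then have [simp]: "inf F (Inf C) = (if C = {} then F else Inf C)"
        using C by (auto simp add: inf_absorb2)
      from C show "inf F (Inf C) \<noteq> bot"
        by (simp add: F Inf_C)
      from C show "inf F (Inf C) \<le> F"
        by (simp add: Chains_def Inf_C F)
      with C show "inf F (Inf C) \<le> x" "x \<le> F" if "x \<in> C" for x
        using that  by (auto intro: Inf_lower simp: Chains_def)
    qed
  qed
  then obtain U where U: "U \<in> ?A" "?B U" ..
  have ult: "eventually P U \<or> eventually (\<lambda>x. \<not> P x) U" for P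
  proof (rule disjCI)
    assume "\<not> (\<forall>\<^sub>Fx in U. \<not> P x)"
    then have ne: "inf U (principal {x. P x}) \<noteq> bot"
      by (simp add: trivial_limit_def eventually_inf_principal not_eventually)
    have le: "inf U (principal {x. P x}) \<le> F"
    proof -
      have "U \<le> F" using U(1) by simp
      then show ?thesis by (rule order_trans[OF inf_le1])
    qed
    have inR: "(U, inf U (principal {x. P x})) \<in> ?R"
      using ne U(1) inf_le1 by simp
    have "inf U (principal {x. P x}) \<in> Field ?R"
      using ne le by simp
    then have "inf U (principal {x. P x}) = U"
      using U(2)[rule_format, OF _ inR] by simp
    then have UU: "U = inf U (principal {x. P x})" by simp
    show "eventually P U"
      by (subst UU) (simp add: eventually_inf_principal)
  qed
  show ?thesis using U(1) ult by auto
qed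

lemma cc_imp_cluster:
  fixes x :: "nat \<Rightarrow> 'a"
  assumes cc: "countably_compact_space X" and x: "\<And>n. x n \<in> topspace X"
  shows "\<exists>p\<in>topspace X. \<forall>V. openin X V \<and> p \<in> V \<longrightarrow> (\<forall>N. \<exists>n\<ge>N. x n \<in> V)"
proof (rule ccontr)
  assume "\<not> ?thesis"
  then have H: "\<forall>p\<in>topspace X. \<exists>V N. openin X V \<and> p \<in> V \<and> (\<forall>n\<ge>N. x n \<notin> V)"
    by (meson not_le)
  define C where "C N = topspace X - X closure_of (x ` {N..})" for N
  have opC: "openin X (C N)" for N
    unfolding C_def by (simp add: openin_diff closedin_closure_of)
  have cov: "topspace X \<subseteq> \<Union>(range C)"
  proof
    fix p assume p: "p \<in> topspace X"
    from H p obtain V N where V: "openin X V" "p \<in> V" "\<forall>n\<ge>N. x n \<notin> V"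
      by (elim ballE exE conjE) auto
    have "p \<notin> X closure_of (x ` {N..})"
    proof
      assume "p \<in> X closure_of (x ` {N..})"
      then have "\<forall>T. p \<in> T \<and> openin X T \<longrightarrow> (\<exists>y. y \<in> x ` {N..} \<and> y \<in> T)"
        unfolding in_closure_of by (elim conjE)
      then obtain y where "y \<in> x ` {N..}" "y \<in> V" using V(1,2) by (meson)
      then show False using V(3) by auto
    qed
    then have "p \<in> C N" using p unfolding C_def by simp
    then show "p \<in> \<Union>(range C)" by blast
  qed
  have "countable (range C)" by simp
  then obtain F where F: "finite F" "F \<subseteq> range C" "topspace X \<subseteq> \<Union>F"
    using cc[unfolded countably_compact_space_def, rule_format, of "range C"] opC cov by blast
  then obtain I where I: "finite I" "F = C ` I" by (meson finite_subset_image)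
  define m where "m = Max (insert 0 I)"
  have "x m \<in> \<Union>F" using F(3) x by blast
  then obtain N where N: "N \<in> I" "x m \<in> C N" using I(2) by blast
  have "N \<le> m" unfolding m_def using Max_ge[of "insert 0 I" N] N(1) I(1) by simp
  have "x m \<in> X closure_of (x ` {N..})"
  proof (rule closure_of_subset[THEN subsetD])
    show "x ` {N..} \<subseteq> topspace X" using x by blast
    show "x m \<in> x ` {N..}" using \<open>N \<le> m\<close> by simp
  qed
  then show False using N(2) unfolding C_def by auto
qed

lemma cluster_imp_cc:
  assumes H: "\<And>x::nat \<Rightarrow> 'a. (\<And>n. x n \<in> topspace X) \<Longrightarrow>
     \<exists>p\<in>topspace X. \<forall>V. openin X V \<and> p \<in> V \<longrightarrow> (\<forall>N. \<exists>n\<ge>N. x n \<in> V)"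
  shows "countably_compact_space X"
  unfolding countably_compact_space_def
proof (intro allI impI)
  fix \<U> assume A: "countable \<U> \<and> (\<forall>U\<in>\<U>. openin X U) \<and> topspace X \<subseteq> \<Union>\<U>"
  show "\<exists>F. finite F \<and> F \<subseteq> \<U> \<and> topspace X \<subseteq> \<Union>F"
  proof (cases "\<U> = {}")
    case True then show ?thesis using A by auto
  next
    case False
    define u where "u = from_nat_into \<U>"
    have ru: "range u = \<U>" using A False by (simp add: u_def range_from_nat_into)
    show ?thesis
    proof (rule ccontr)
      assume nf: "\<not> ?thesis"
      have "\<forall>n. \<exists>y. y \<in> topspace X \<and> y \<notin> \<Union>(u ` {..n})"
      proof
        fix n
        have "finite (u ` {..n})" "u ` {..n} \<subseteq> \<U>" using ru by auto
        then have "\<not> topspace X \<subseteq> \<Union>(u`{..n})" using nf by blast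
        then show "\<exists>y. y \<in> topspace X \<and> y \<notin> \<Union>(u ` {..n})" by blast
      qed
      then obtain x where x: "\<And>n. x n \<in> topspace X" "\<And>n. x n \<notin> \<Union>(u`{..n})" by metis
      obtain p where p: "p \<in> topspace X" "\<forall>V. openin X V \<and> p \<in> V \<longrightarrow> (\<forall>N. \<exists>n\<ge>N. x n \<in> V)"
        using H x(1) by blast
      then obtain m where m: "p \<in> u m" using A ru by blast
      moreover have "openin X (u m)" using A ru by blast
      ultimately obtain n where "n \<ge> m" "x n \<in> u m" using p(2) by blast
      then show False using x(2)[of n] by auto
    qed
  qed
qed

lemma cluster_ultra:
  fixes x :: "nat \<Rightarrow> 'a"
  assumes p: "p \<in> topspace X" and cl: "\<forall>V. openin X V \<and> p \<in> V \<longrightarrow> (\<forall>N. \<exists>n\<ge>N. x n \<in> V)"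
  shows "\<exists>U. U \<noteq> bot \<and> U \<le> sequentially \<and> (\<forall>P. eventually P U \<or> eventually (\<lambda>n. \<not> P n) U)
            \<and> limitin X x p U"
proof -
  let ?F = "inf (filtercomap x (nhdsin X p)) sequentially"
  have "?F \<noteq> bot"
  proof
    assume "?F = bot"
    then have "eventually (\<lambda>_. False) ?F" by simp
    then obtain P Q where PQ: "eventually P (filtercomap x (nhdsin X p))" "eventually Q sequentially"
        "\<forall>n. P n \<and> Q n \<longrightarrow> False"
      unfolding eventually_inf by blast
    from PQ(1) obtain R where R: "eventually R (nhdsin X p)" "\<forall>n. R (x n) \<longrightarrow> P n"
      unfolding eventually_filtercomap by blast
    from R(1) p obtain S where S: "openin X S" "p \<in> S" "\<forall>y\<in>S. R y"
      unfolding eventually_nhdsin by blast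
    from PQ(2) obtain N where N: "\<forall>n\<ge>N. Q n" unfolding eventually_sequentially by blast
    from cl S obtain n where "n \<ge> N" "x n \<in> S" by blast
    then show False using PQ(3) N R(2) S(3) by blast
  qed
  then obtain U where U: "U \<le> ?F" "U \<noteq> bot" "\<forall>P. eventually P U \<or> eventually (\<lambda>n. \<not> P n) U"
    using my_max_ultrafilter by blast
  have "limitin X x p U" unfolding limitin_def
  proof (intro conjI allI impI)
    show "p \<in> topspace X" by (rule p)
    fix V assume V: "openin X V \<and> p \<in> V"
    have "eventually (\<lambda>y. y \<in> V) (nhdsin X p)" using V unfolding eventually_nhdsin by blast
    then have "eventually (\<lambda>n. x n \<in> V) (filtercomap x (nhdsin X p))"
      by (rule eventually_filtercomapI)
    moreover have "U \<le> filtercomap x (nhdsin X p)" using U(1) by (rule order_trans[OF _ inf_le1])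
    ultimately show "eventually (\<lambda>n. x n \<in> V) U" using filter_leD by blast
  qed
  moreover have "U \<le> sequentially" using U(1) by (rule order_trans[OF _ inf_le2])
  ultimately show ?thesis using U by blast
qed

lemma ultra_cluster:
  fixes x :: "nat \<Rightarrow> 'a"
  assumes "U \<noteq> bot" "U \<le> sequentially" "limitin X x p U"
  shows "p \<in> topspace X \<and> (\<forall>V. openin X V \<and> p \<in> V \<longrightarrow> (\<forall>N. \<exists>n\<ge>N. x n \<in> V))"
proof -
  have "\<exists>n\<ge>N. x n \<in> V" if "openin X V" "p \<in> V" for V N
  proof -
    have "eventually (\<lambda>n. x n \<in> V) U" using assms(3) that unfolding limitin_def by blast
    moreover have "eventually (\<lambda>n. n \<ge> N) U"
      using assms(2) filter_leD eventually_ge_at_top by blast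
    ultimately have "eventually (\<lambda>n. x n \<in> V \<and> n \<ge> N) U" by (rule eventually_conj)
    then show ?thesis using eventually_happens[of _ U] assms(1) by blast
  qed
  then show ?thesis using assms(3) unfolding limitin_def by blast
qed

lemma alpha_props:
  shows "topspace (alpha_space D) = insert None (Some ` D)"
    and "openin (alpha_space D) V \<Longrightarrow> None \<in> V \<Longrightarrow> finite (D - Some -` V)"
proof -
  let ?C = "insert None (Some ` D)"
  let ?P = "\<lambda>U. U \<subseteq> ?C \<and> (None \<in> U \<longrightarrow> finite (D - Some -` U))"
  have "topspace (alpha_space D) = ?C \<and>
        (openin (alpha_space D) V \<longrightarrow> None \<in> V \<longrightarrow> finite (D - Some -` V))"
  proof (cases "finite D")
    case True
    then show ?thesis by (simp add: alpha_space_def)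
  next
    case False
    have ist: "istopology ?P"
      unfolding istopology_def
    proof (rule conjI)
      show "\<forall>S T. ?P S \<longrightarrow> ?P T \<longrightarrow> ?P (S \<inter> T)"
      proof (intro allI impI)
        fix S T assume S: "?P S" and T: "?P T"
        have "D - Some -` (S \<inter> T) = (D - Some -` S) \<union> (D - Some -` T)" by auto
        then show "?P (S \<inter> T)" using S T by auto
      qed
      show "\<forall>K. (\<forall>k\<in>K. ?P k) \<longrightarrow> ?P (\<Union>K)"
      proof (intro allI impI)
        fix K assume K: "\<forall>k\<in>K. ?P k"
        show "?P (\<Union>K)"
        proof (intro conjI impI)
          show "\<Union>K \<subseteq> ?C" using K by blast
          assume "None \<in> \<Union>K"
          then obtain k where k: "k \<in> K" "None \<in> k" by blast
          then have "finite (D - Some -` k)" using K by blast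
          moreover have "D - Some -` \<Union>K \<subseteq> D - Some -` k" using k by auto
          ultimately show "finite (D - Some -` \<Union>K)" by (rule finite_subset[rotated])
        qed
      qed
    qed
    have op: "openin (alpha_space D) = ?P"
      using False ist by (simp add: alpha_space_def topology_inverse')
    have "topspace (alpha_space D) = ?C"
    proof
      show "topspace (alpha_space D) \<subseteq> ?C"
        unfolding topspace_def op by blast
      have "D - Some -` ?C = {}" by auto
      then have "openin (alpha_space D) ?C" unfolding op by (simp only: finite.emptyI) simp
      then show "?C \<subseteq> topspace (alpha_space D)" by (rule openin_subset)
    qed
    then show ?thesis unfolding op by simp
  qed
  then show "topspace (alpha_space D) = ?C"
    and "openin (alpha_space D) V \<Longrightarrow> None \<in> V \<Longrightarrow> finite (D - Some -` V)" by auto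
qed

lemma glued_topspace:
  assumes "\<pi> \<in> D \<rightarrow> topspace M"
  shows "topspace (glued_space D \<pi> M) = (\<lambda>x. (Some x, \<pi> x)) ` D \<union> ({None} \<times> topspace M)"
  using assms unfolding glued_space_def by (auto simp: alpha_props)

theorem proposition1p4:
  fixes D :: "'d set" and M :: "'m topology" and \<pi> :: "'d \<Rightarrow> 'm" and K :: "'k set"
  assumes "Hausdorff_space M"
    and "\<pi> \<in> D \<rightarrow> topspace M"
    and "countably_compact_space (product_topology (\<lambda>_. M) K)"
  shows "countably_compact_space (product_topology (\<lambda>_. glued_space D \<pi> M) K)"
proof (rule cluster_imp_cc)
  let ?G = "glued_space D \<pi> M"
  let ?S = "(\<lambda>x. (Some x, \<pi> x)) ` D \<union> ({None} \<times> topspace M)"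
  have tG: "topspace ?G = ?S" using assms(2) by (rule glued_topspace)
  fix f :: "nat \<Rightarrow> 'k \<Rightarrow> 'd option \<times> 'm"
  assume f: "\<And>n. f n \<in> topspace (product_topology (\<lambda>_. ?G) K)"
  have fS: "f n k \<in> ?S" if "k \<in> K" for n k
  proof -
    have "f n \<in> (\<Pi>\<^sub>E i\<in>K. topspace ?G)" using f[of n] by simp
    then have "f n k \<in> topspace ?G" using that by (rule PiE_mem)
    then show ?thesis using tG by simp
  qed
  have sndS: "snd z \<in> topspace M" if "z \<in> ?S" for z
    using that
  proof
    assume "z \<in> (\<lambda>x. (Some x, \<pi> x)) ` D"
    then obtain x where "x \<in> D" "z = (Some x, \<pi> x)" by blast
    then show ?thesis using funcset_mem[OF assms(2)] by simp
  next
    assume "z \<in> {None} \<times> topspace M"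
    then show ?thesis by auto
  qed
  define g where "g n = (\<lambda>k\<in>K. snd (f n k))" for n
  have g: "g n \<in> topspace (product_topology (\<lambda>_. M) K)" for n
    unfolding g_def topspace_product_topology restrict_PiE_iff using fS sndS by blast
  from cc_imp_cluster[OF assms(3) g] obtain p where p: "p \<in> topspace (product_topology (\<lambda>_. M) K)"
    "\<forall>V. openin (product_topology (\<lambda>_. M) K) V \<and> p \<in> V \<longrightarrow> (\<forall>N. \<exists>n\<ge>N. g n \<in> V)" ..
  obtain U where U: "U \<noteq> bot" "U \<le> sequentially"
    "\<forall>P. eventually P U \<or> eventually (\<lambda>n. \<not> P n) U"
    "limitin (product_topology (\<lambda>_. M) K) g p U"
    using cluster_ultra[OF p] by (elim exE conjE) (rule that)
  have gl: "limitin M (\<lambda>n. snd (f n k)) (p k) U" if "k \<in> K" for k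
  proof -
    have "\<forall>i\<in>K. limitin M (\<lambda>c. g c i) (p i) U"
      using U(4) unfolding limitin_componentwise by (elim conjE)
    then have "limitin M (\<lambda>c. g c k) (p k) U" using that by (rule bspec)
    then show ?thesis using that by (simp add: g_def)
  qed
  have pk: "p k \<in> topspace M" if "k \<in> K" for k
    using PiE_mem[OF p(1)[unfolded topspace_product_topology] that] .
  define E where "E k d \<longleftrightarrow> d \<in> D \<and> eventually (\<lambda>n. f n k = (Some d, \<pi> d)) U" for k d
  define q where "q = (\<lambda>k\<in>K. if \<exists>d. E k d then (Some (SOME d. E k d), \<pi> (SOME d. E k d))
                               else (None, p k))"
  have ql: "limitin ?G (\<lambda>n. f n k) (q k) U" if k: "k \<in> K" for k
  proof (cases "\<exists>d. E k d")
    case True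
    define d where "d = (SOME d. E k d)"
    have Ed: "E k d" unfolding d_def using True by (rule someI_ex)
    have qk: "q k = (Some d, \<pi> d)" using k True by (simp add: q_def d_def)
    show ?thesis unfolding qk
    proof (rule limitin_eventually)
      show "(Some d, \<pi> d) \<in> topspace ?G" using Ed tG by (auto simp: E_def)
      show "\<forall>\<^sub>F n in U. f n k = (Some d, \<pi> d)" using Ed by (simp add: E_def)
    qed
  next
    case False
    have qk: "q k = (None, p k)" using k False by (simp add: q_def)
    have ev_ne: "eventually (\<lambda>n. f n k \<noteq> (Some d, \<pi> d)) U" if "d \<in> D" for d
    proof -
      have "\<not> eventually (\<lambda>n. f n k = (Some d, \<pi> d)) U" using False that by (auto simp: E_def)
      then show ?thesis using U(3) by auto
    qed
    have fst_lim: "limitin (alpha_space D) (\<lambda>n. fst (f n k)) None U"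
      unfolding limitin_def
    proof (intro conjI allI impI)
      show "None \<in> topspace (alpha_space D)" by (simp add: alpha_props)
      fix V assume V: "openin (alpha_space D) V \<and> None \<in> V"
      then have fin: "finite (D - Some -` V)" using alpha_props(2) by blast
      have "eventually (\<lambda>n. \<forall>d\<in>D - Some -` V. f n k \<noteq> (Some d, \<pi> d)) U"
        using fin ev_ne by (intro eventually_ball_finite) auto
      then show "eventually (\<lambda>n. fst (f n k) \<in> V) U"
      proof (rule eventually_mono)
        fix n assume H: "\<forall>d\<in>D - Some -` V. f n k \<noteq> (Some d, \<pi> d)"
        have "f n k \<in> ?S" using fS k by blast
        then show "fst (f n k) \<in> V"
        proof
          assume "f n k \<in> (\<lambda>x. (Some x, \<pi> x)) ` D"
          then obtain x where x: "x \<in> D" "f n k = (Some x, \<pi> x)" by blast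
          then have "x \<notin> D - Some -` V" using H by blast
          then show ?thesis using x by auto
        next
          assume "f n k \<in> {None} \<times> topspace M"
          then show ?thesis using V by auto
        qed
      qed
    qed
    show ?thesis unfolding qk glued_space_def limitin_subtopology
    proof (intro conjI)
      show "(None, p k) \<in> ?S" using pk k by auto
      show "eventually (\<lambda>n. f n k \<in> ?S) U" using fS k by simp
      show "limitin (prod_topology (alpha_space D) M) (\<lambda>n. f n k) (None, p k) U"
        unfolding limitin_pairwise using fst_lim gl[OF k] by (simp add: o_def)
    qed
  qed
  have "limitin (product_topology (\<lambda>_. ?G) K) f q U"
    unfolding limitin_componentwise
  proof (intro conjI ballI)
    show "q \<in> extensional K" by (simp add: q_def)
    show "eventually (\<lambda>a. f a \<in> topspace (product_topology (\<lambda>_. ?G) K)) U" using f by simp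
    fix k assume "k \<in> K" then show "limitin ?G (\<lambda>c. f c k) (q k) U" by (rule ql)
  qed
  then show "\<exists>p\<in>topspace (product_topology (\<lambda>_. ?G) K).
     \<forall>V. openin (product_topology (\<lambda>_. ?G) K) V \<and> p \<in> V \<longrightarrow> (\<forall>N. \<exists>n\<ge>N. f n \<in> V)"
  proof -
    note h = ultra_cluster[OF U(1,2) \<open>limitin (product_topology (\<lambda>_. ?G) K) f q U\<close>]
    show ?thesis
    proof (rule bexI[where x=q])
      show "q \<in> topspace (product_topology (\<lambda>_. ?G) K)" using h by (rule conjunct1)
      show "\<forall>V. openin (product_topology (\<lambda>_. ?G) K) V \<and> q \<in> V \<longrightarrow> (\<forall>N. \<exists>n\<ge>N. f n \<in> V)"
        using h by (rule conjunct2)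
    qed
  qed
qed

end
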